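(* Let $R$ be a field, $S$ an idempotent semifield, and $v:R\to S$ a B\'ezout valuation such that the restriction $v^\circ:R^\circ\to S^\circ$ is surjective. Then there is a one-to-one correspondence between ideals $I\subseteq R^\circ$ and $k$-ideals $J\subseteq S^\circ$, given by $J=v(I)$ and $I=v^{-1}(J)$ (i.e. $I=\{a\in R^\circ: v(a)\in J\}$). This correspondence preserves prime ideals.
   Context: An idempotent semiring is a commutative semiring with $a+a=a$; it is ordered by $a\le b$ iff $a+b=b$. A semifield is a semiring whose nonzero elements are multiplicatively invertible. A (non-Archimedean) seminorm $v:R\to S$ satisfies $v(0)=0$, $v(1)=1$, $v(-1)=1$, $v(ab)\le v(a)v(b)$, $v(a+b)\le v(a)+v(b)$; it is a valuation if it is multiplicative ($v(ab)=v(a)v(b)$) and $v(a)\ne0$ for $a\neq0$. $R^\circ=\{a\in R:v(a)\le1\}$ and $S^\circ=\{x\in S:x\le1\}$; $v^\circ$ is the restriction of $v$. For $R$ a field and $S$ a semifield, a multiplicative seminorm $v$ is B\'ezout if for all $a,b\in R$ there exist $x,y\in R^\circ$ with $v(xa+yb)=v(a)+v(b)$. An ideal of a semiring $S'$ is a subset containing $0$, closed under addition and under multiplication by elements of $S'$; it is a $k$-ideal if $a+b\in I$ and $a\in I$ imply $b\in I$; it is prime if its complement is multiplicatively closed. *)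

theory Defs
  imports Main
begin

definition sle :: "'s::comm_semiring_1 \<Rightarrow> 's \<Rightarrow> bool" where
  "sle a b \<longleftrightarrow> a + b = b"

definition idem_semifield :: "'s::comm_semiring_1 itself \<Rightarrow> bool" where
  "idem_semifield _ \<longleftrightarrow>
     (0::'s) \<noteq> 1 \<and> (\<forall>a::'s. a + a = a) \<and> (\<forall>a::'s. a \<noteq> 0 \<longrightarrow> (\<exists>b. a * b = 1))"

definition seminorm :: "('r::comm_ring_1 \<Rightarrow> 's::comm_semiring_1) \<Rightarrow> bool" where
  "seminorm v \<longleftrightarrow> v 0 = 0 \<and> v 1 = 1 \<and> v (-1) = 1 \<and>
     (\<forall>a b. sle (v (a * b)) (v a * v b)) \<and> (\<forall>a b. sle (v (a + b)) (v a + v b))"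

definition valuation :: "('r::comm_ring_1 \<Rightarrow> 's::comm_semiring_1) \<Rightarrow> bool" where
  "valuation v \<longleftrightarrow> seminorm v \<and> (\<forall>a b. v (a * b) = v a * v b) \<and> (\<forall>a. a \<noteq> 0 \<longrightarrow> v a \<noteq> 0)"

definition Rcirc :: "('r::comm_ring_1 \<Rightarrow> 's::comm_semiring_1) \<Rightarrow> 'r set" where
  "Rcirc v = {a. sle (v a) 1}"

definition Scirc :: "'s::comm_semiring_1 set" where
  "Scirc = {x. sle x 1}"

definition bezout :: "('r::comm_ring_1 \<Rightarrow> 's::comm_semiring_1) \<Rightarrow> bool" where
  "bezout v \<longleftrightarrow> (\<forall>a b. \<exists>x y. x \<in> Rcirc v \<and> y \<in> Rcirc v \<and> v (x * a + y * b) = v a + v b)"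

definition ideal_in :: "'a::comm_semiring_1 set \<Rightarrow> 'a set \<Rightarrow> bool" where
  "ideal_in A I \<longleftrightarrow> I \<subseteq> A \<and> 0 \<in> I \<and> (\<forall>a\<in>I. \<forall>b\<in>I. a + b \<in> I) \<and>
     (\<forall>r\<in>A. \<forall>a\<in>I. r * a \<in> I)"

definition k_ideal_in :: "'a::comm_semiring_1 set \<Rightarrow> 'a set \<Rightarrow> bool" where
  "k_ideal_in A J \<longleftrightarrow> ideal_in A J \<and> (\<forall>a\<in>A. \<forall>b\<in>A. a + b \<in> J \<and> a \<in> J \<longrightarrow> b \<in> J)"

definition prime_in :: "'a::comm_semiring_1 set \<Rightarrow> 'a set \<Rightarrow> bool" where
  "prime_in A I \<longleftrightarrow> ideal_in A I \<and> 1 \<notin> I \<and>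
     (\<forall>a\<in>A. \<forall>b\<in>A. a \<notin> I \<and> b \<notin> I \<longrightarrow> a * b \<notin> I)"

end

theory Submission
  imports Defs
begin

lemma sle_trans: "sle a b \<Longrightarrow> sle b c \<Longrightarrow> sle (a::'s::comm_semiring_1) c"
  unfolding sle_def by (metis add.assoc)

lemma sle_mult: "sle a b \<Longrightarrow> sle (a * c) (b * (c::'s::comm_semiring_1))"
  unfolding sle_def by (metis distrib_right)

lemma sle_add: "sle a c \<Longrightarrow> sle b c \<Longrightarrow> sle (a + b) (c::'s::comm_semiring_1)"
  unfolding sle_def by (metis add.assoc)

lemma DC:
  fixes v :: "'r::field \<Rightarrow> 's::comm_semiring_1"
  assumes val: "valuation v" and I: "ideal_in (Rcirc v) I"
    and g: "g \<in> I" and le: "sle (v b) (v g)"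
  shows "b \<in> I"
proof (cases "g = 0")
  case True
  have "v b = 0" using le True val unfolding sle_def valuation_def seminorm_def by simp
  hence "b = 0" using val unfolding valuation_def by metis
  thus ?thesis using I unfolding ideal_in_def by simp
next
  case False
  have mult: "\<And>x y. v (x * y) = v x * v y" using val unfolding valuation_def by blast
  have v1: "v 1 = 1" using val unfolding valuation_def seminorm_def by blast
  have inv: "v g * v (inverse g) = 1" using False mult v1 by (metis right_inverse)
  have "sle (v b * v (inverse g)) (v g * v (inverse g))" using le by (rule sle_mult)
  hence "sle (v (b * inverse g)) 1" using inv mult by simp
  hence c: "b * inverse g \<in> Rcirc v" unfolding Rcirc_def by simp
  hence "(b * inverse g) * g \<in> I" using I g unfolding ideal_in_def by blast
  thus ?thesis using False by (simp add: field_simps)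
qed

theorem theorem2p12:
  fixes v :: "'r::field \<Rightarrow> 's::comm_semiring_1"
  assumes "idem_semifield TYPE('s)"
    and "valuation v"
    and "bezout v"
    and "v ` Rcirc v = Scirc"
  shows "(\<forall>I. ideal_in (Rcirc v) I \<longrightarrow>
            k_ideal_in Scirc (v ` I) \<and> {a \<in> Rcirc v. v a \<in> v ` I} = I)
       \<and> (\<forall>J. k_ideal_in Scirc J \<longrightarrow>
            ideal_in (Rcirc v) {a \<in> Rcirc v. v a \<in> J} \<and> v ` {a \<in> Rcirc v. v a \<in> J} = J)
       \<and> (\<forall>I. ideal_in (Rcirc v) I \<longrightarrow> (prime_in (Rcirc v) I \<longleftrightarrow> prime_in Scirc (v ` I)))
       \<and> (\<forall>J. k_ideal_in Scirc J \<longrightarrow>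
            (prime_in Scirc J \<longleftrightarrow> prime_in (Rcirc v) {a \<in> Rcirc v. v a \<in> J}))"
proof -
  have idem: "\<And>x::'s. x + x = x" using assms(1) unfolding idem_semifield_def by blast
  have val: "valuation v" by fact
  have mult: "\<And>x y. v (x * y) = v x * v y" using val unfolding valuation_def by blast
  have v1: "v 1 = 1" and v0: "v 0 = 0" using val unfolding valuation_def seminorm_def by blast+
  have tri: "\<And>a b. sle (v (a + b)) (v a + v b)"
    using val unfolding valuation_def seminorm_def by blast
  have surj: "v ` Rcirc v = Scirc" by fact
  have P1: "k_ideal_in Scirc (v ` I) \<and> {a \<in> Rcirc v. v a \<in> v ` I} = I"
    if I: "ideal_in (Rcirc v) I" for I
  proof -
    have sub: "I \<subseteq> Rcirc v" using I unfolding ideal_in_def by blast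
    have "v ` I \<subseteq> Scirc" using sub unfolding Rcirc_def Scirc_def by blast
    moreover have "0 \<in> v ` I" using I v0 unfolding ideal_in_def by force
    moreover have "\<forall>a\<in>v ` I. \<forall>b\<in>v ` I. a + b \<in> v ` I"
    proof (intro ballI)
      fix a b assume "a \<in> v ` I" "b \<in> v ` I"
      then obtain \<alpha> \<beta> where ab: "\<alpha> \<in> I" "\<beta> \<in> I" "a = v \<alpha>" "b = v \<beta>" by blast
      obtain x y where xy: "x \<in> Rcirc v" "y \<in> Rcirc v" "v (x * \<alpha> + y * \<beta>) = v \<alpha> + v \<beta>"
        using assms(3) unfolding bezout_def by blast
      have "x * \<alpha> + y * \<beta> \<in> I" using I xy ab unfolding ideal_in_def by blast
      thus "a + b \<in> v ` I" using xy ab by (metis image_eqI)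
    qed
    moreover have "\<forall>r\<in>Scirc. \<forall>a\<in>v ` I. r * a \<in> v ` I"
    proof (intro ballI)
      fix r a :: 's assume "r \<in> Scirc" "a \<in> v ` I"
      then obtain c \<alpha> where "c \<in> Rcirc v" "r = v c" "\<alpha> \<in> I" "a = v \<alpha>" using surj by blast
      moreover have "c * \<alpha> \<in> I" using I calculation unfolding ideal_in_def by blast
      ultimately show "r * a \<in> v ` I" using mult by (metis image_eqI)
    qed
    moreover have "\<forall>a\<in>Scirc. \<forall>b\<in>Scirc. a + b \<in> v ` I \<and> a \<in> v ` I \<longrightarrow> b \<in> v ` I"
    proof (intro ballI impI)
      fix a b :: 's assume b: "b \<in> Scirc" and h: "a + b \<in> v ` I \<and> a \<in> v ` I"
      then obtain \<beta> \<gamma> where "b = v \<beta>" "\<gamma> \<in> I" "a + b = v \<gamma>" using surj by blast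
      moreover have "sle b (a + b)" unfolding sle_def
        by (metis add.assoc add.commute idem)
      ultimately have "\<beta> \<in> I" using DC[OF val I] by metis
      thus "b \<in> v ` I" using \<open>b = v \<beta>\<close> by blast
    qed
    ultimately have "k_ideal_in Scirc (v ` I)" unfolding k_ideal_in_def ideal_in_def by blast
    moreover have "{a \<in> Rcirc v. v a \<in> v ` I} = I"
    proof
      show "I \<subseteq> {a \<in> Rcirc v. v a \<in> v ` I}" using sub by blast
      show "{a \<in> Rcirc v. v a \<in> v ` I} \<subseteq> I"
      proof
        fix a assume "a \<in> {a \<in> Rcirc v. v a \<in> v ` I}"
        then obtain g where "g \<in> I" "v a = v g" by auto
        moreover have "sle (v g) (v g)" unfolding sle_def by (rule idem)
        ultimately show "a \<in> I" using DC[OF val I] by metis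
      qed
    qed
    ultimately show ?thesis by blast
  qed
  have P2: "ideal_in (Rcirc v) {a \<in> Rcirc v. v a \<in> J} \<and> v ` {a \<in> Rcirc v. v a \<in> J} = J"
    if J: "k_ideal_in Scirc J" for J
  proof -
    have Jsub: "J \<subseteq> Scirc" using J unfolding k_ideal_in_def ideal_in_def by blast
    have down: "x \<in> J" if "x \<in> Scirc" "y \<in> J" "sle x y" for x y
    proof -
      have "y + x \<in> J" using that by (simp add: sle_def add.commute)
      thus ?thesis using J that Jsub unfolding k_ideal_in_def by blast
    qed
    have "0 \<in> {a \<in> Rcirc v. v a \<in> J}" using J v0 unfolding k_ideal_in_def ideal_in_def Rcirc_def sle_def
      by simp
    moreover have "\<forall>a\<in>{a \<in> Rcirc v. v a \<in> J}. \<forall>b\<in>{a \<in> Rcirc v. v a \<in> J}. a + b \<in> {a \<in> Rcirc v. v a \<in> J}"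
    proof (intro ballI)
      fix a b assume a: "a \<in> {a \<in> Rcirc v. v a \<in> J}" and b: "b \<in> {a \<in> Rcirc v. v a \<in> J}"
      have s: "v a + v b \<in> J" using a b J unfolding k_ideal_in_def ideal_in_def by blast
      have le1: "sle (v a + v b) 1" using a b unfolding Rcirc_def by (simp add: sle_add)
      have "sle (v (a + b)) 1" using sle_trans[OF tri le1] .
      hence ab: "a + b \<in> Rcirc v" "v (a + b) \<in> Scirc" unfolding Rcirc_def Scirc_def by auto
      have "v (a + b) \<in> J" using down[OF ab(2) s tri] .
      thus "a + b \<in> {a \<in> Rcirc v. v a \<in> J}" using ab by blast
    qed
    moreover have "\<forall>r\<in>Rcirc v. \<forall>a\<in>{a \<in> Rcirc v. v a \<in> J}. r * a \<in> {a \<in> Rcirc v. v a \<in> J}"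
    proof (intro ballI)
      fix r a assume r: "r \<in> Rcirc v" and a: "a \<in> {a \<in> Rcirc v. v a \<in> J}"
      have "v r \<in> Scirc" using r unfolding Rcirc_def Scirc_def by simp
      hence "v r * v a \<in> J" using a J unfolding k_ideal_in_def ideal_in_def by blast
      moreover have "sle (v r * v a) (1 * v a)" using r sle_mult[of "v r" 1 "v a"] unfolding Rcirc_def by simp
      hence "sle (v (r * a)) 1" using a mult unfolding Rcirc_def by (metis mult_1 sle_trans mem_Collect_eq)
      ultimately show "r * a \<in> {a \<in> Rcirc v. v a \<in> J}" using mult unfolding Rcirc_def by simp
    qed
    ultimately have "ideal_in (Rcirc v) {a \<in> Rcirc v. v a \<in> J}" unfolding ideal_in_def by blast
    moreover have "v ` {a \<in> Rcirc v. v a \<in> J} = J"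
    proof
      show "v ` {a \<in> Rcirc v. v a \<in> J} \<subseteq> J" by blast
      show "J \<subseteq> v ` {a \<in> Rcirc v. v a \<in> J}"
      proof
        fix y assume "y \<in> J"
        then obtain a where "a \<in> Rcirc v" "y = v a" using Jsub surj by (metis imageE subsetD)
        thus "y \<in> v ` {a \<in> Rcirc v. v a \<in> J}" using \<open>y \<in> J\<close> by blast
      qed
    qed
    ultimately show ?thesis by blast
  qed
  have P3: "prime_in (Rcirc v) I \<longleftrightarrow> prime_in Scirc (v ` I)"
    if I: "ideal_in (Rcirc v) I" for I
  proof -
    have kI: "k_ideal_in Scirc (v ` I)" and pre: "{a \<in> Rcirc v. v a \<in> v ` I} = I"
      using P1[OF I] by auto
    have iS: "ideal_in Scirc (v ` I)" using kI unfolding k_ideal_in_def by blast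
    have one: "1 \<in> I \<longleftrightarrow> 1 \<in> v ` I"
    proof
      assume "1 \<in> I" thus "1 \<in> v ` I" using v1 by force
    next
      assume "1 \<in> v ` I"
      moreover have "(1::'r) \<in> Rcirc v" using v1 idem unfolding Rcirc_def sle_def by simp
      ultimately show "1 \<in> I" using pre v1 by (metis (mono_tags, lifting) mem_Collect_eq)
    qed
    have notin: "v a \<in> v ` I \<longleftrightarrow> a \<in> I" if "a \<in> Rcirc v" for a
      using pre that by blast
    have vR: "v a \<in> Scirc" if "a \<in> Rcirc v" for a
      using that unfolding Rcirc_def Scirc_def by simp
    have mR: "a * b \<in> Rcirc v" if "a \<in> Rcirc v" "b \<in> Rcirc v" for a b
    proof -
      have "sle (v a * v b) (1 * v b)" using that sle_mult[of "v a" 1 "v b"] unfolding Rcirc_def by simp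
      thus ?thesis using that mult unfolding Rcirc_def by (metis mult_1 sle_trans mem_Collect_eq)
    qed
    show ?thesis
    proof
      assume p: "prime_in (Rcirc v) I"
      have "\<forall>a\<in>Scirc. \<forall>b\<in>Scirc. a \<notin> v ` I \<and> b \<notin> v ` I \<longrightarrow> a * b \<notin> v ` I"
      proof (intro ballI impI)
        fix a b :: 's assume "a \<in> Scirc" "b \<in> Scirc" and h: "a \<notin> v ` I \<and> b \<notin> v ` I"
        then obtain \<alpha> \<beta> where ab: "\<alpha> \<in> Rcirc v" "\<beta> \<in> Rcirc v" "a = v \<alpha>" "b = v \<beta>"
          using surj by (metis imageE)
        have "\<alpha> \<notin> I" "\<beta> \<notin> I" using h ab by auto
        hence "\<alpha> * \<beta> \<notin> I" using p ab unfolding prime_in_def by blast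
        thus "a * b \<notin> v ` I" using notin[OF mR[OF ab(1,2)]] ab mult by simp
      qed
      thus "prime_in Scirc (v ` I)" using p iS one unfolding prime_in_def by blast
    next
      assume p: "prime_in Scirc (v ` I)"
      have "\<forall>a\<in>Rcirc v. \<forall>b\<in>Rcirc v. a \<notin> I \<and> b \<notin> I \<longrightarrow> a * b \<notin> I"
      proof (intro ballI impI)
        fix a b assume ab: "a \<in> Rcirc v" "b \<in> Rcirc v" and h: "a \<notin> I \<and> b \<notin> I"
        have "v a \<notin> v ` I" "v b \<notin> v ` I" using h notin ab by auto
        hence "v a * v b \<notin> v ` I" using p vR ab unfolding prime_in_def by blast
        thus "a * b \<notin> I" using mult by (metis image_eqI)
      qed
      thus "prime_in (Rcirc v) I" using p I one unfolding prime_in_def by blast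
    qed
  qed
  have Q4: "prime_in Scirc J \<longleftrightarrow> prime_in (Rcirc v) {a \<in> Rcirc v. v a \<in> J}"
    if J: "k_ideal_in Scirc J" for J
  proof -
    have "ideal_in (Rcirc v) {a \<in> Rcirc v. v a \<in> J}" "v ` {a \<in> Rcirc v. v a \<in> J} = J"
      using P2[OF J] by auto
    thus ?thesis using P3 by metis
  qed
  show ?thesis
    using P1 P2 P3 Q4 by (intro conjI allI impI) simp_all
qed

end
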